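(* Let $X$ be a compactum, let $n\geq2$, let $B\in F_n(X)$, and let $f:X\to X$ be a function. Consider the statements: (1) each $x\in B$ is a transitive point of $f$; (2) $B$ is a transitive point of $F_n(f)$; (3) $q(B)$ is a transitive point of $SF_n(f)$. Then (2) and (3) are equivalent and (2) implies (1). Moreover, (1) does not imply (2) in general: there exist such $X$, $n$, $f$ and $B$ for which (1) holds but (2) fails.
   Context: A compactum is a nondegenerate compact, perfect, Hausdorff topological space. $F_n(X)$ is the set of nonempty subsets of $X$ with at most $n$ points, with the Vietoris topology; $F_1(X)=\{\{x\}:x\in X\}$; $F_n(f)(A)=f(A)$. $SF_n(X)=F_n(X)/F_1(X)$ is the quotient collapsing $F_1(X)$ to a point, $q$ the quotient map, $F_X=q(F_1(X))$, and $SF_n(f)(\chi)=q(F_n(f)(q^{-1}(\chi)))$ for $\chi\neq F_X$, $SF_n(f)(F_X)=F_X$. A point $z$ is a transitive point of $g:Z\to Z$ if its orbit $\{g^k(z):k\in\mathbb{Z}_+\}$ is dense in $Z$. *)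

theory Defs
  imports "HOL-Analysis.Analysis"
begin

definition compactum :: "'a topology \<Rightarrow> bool" where
  "compactum X \<longleftrightarrow> compact_space X \<and> Hausdorff_space X
     \<and> X derived_set_of (topspace X) = topspace X
     \<and> (\<exists>x\<in>topspace X. \<exists>y\<in>topspace X. x \<noteq> y)"

definition Fn :: "'a topology \<Rightarrow> nat \<Rightarrow> 'a set set" where
  "Fn X n = {A. A \<subseteq> topspace X \<and> A \<noteq> {} \<and> finite A \<and> card A \<le> n}"

definition F1 :: "'a topology \<Rightarrow> 'a set set" where
  "F1 X = {{x} | x. x \<in> topspace X}"

definition vietoris :: "'a topology \<Rightarrow> 'a set topology" where
  "vietoris X = topology_generated_by
     ({{A. A \<subseteq> U} | U. openin X U} \<union> {{A. A \<subseteq> topspace X \<and> A \<inter> U \<noteq> {}} | U. openin X U})"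

definition Fn_top :: "'a topology \<Rightarrow> nat \<Rightarrow> 'a set topology" where
  "Fn_top X n = subtopology (vietoris X) (Fn X n)"

definition Fnf :: "('a \<Rightarrow> 'a) \<Rightarrow> 'a set \<Rightarrow> 'a set" where
  "Fnf f A = f ` A"

text \<open>The quotient map q : F_n(X) \<rightarrow> SF_n(X) collapsing F_1(X) to the point F_X = F_1(X);
  other points A are represented by the class {A}.\<close>
definition qmap :: "'a topology \<Rightarrow> 'a set \<Rightarrow> 'a set set" where
  "qmap X A = (if A \<in> F1 X then F1 X else {A})"

definition SF_top :: "'a topology \<Rightarrow> nat \<Rightarrow> 'a set set topology" where
  "SF_top X n = topology (\<lambda>U. U \<subseteq> qmap X ` Fn X n \<and>
       openin (Fn_top X n) {A \<in> Fn X n. qmap X A \<in> U})"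

definition SFf :: "'a topology \<Rightarrow> ('a \<Rightarrow> 'a) \<Rightarrow> 'a set set \<Rightarrow> 'a set set" where
  "SFf X f C = (if C = F1 X then F1 X else qmap X (Fnf f (the_elem C)))"

definition transitive_point :: "'b topology \<Rightarrow> ('b \<Rightarrow> 'b) \<Rightarrow> 'b \<Rightarrow> bool" where
  "transitive_point Z g z \<longleftrightarrow> z \<in> topspace Z \<and>
     Z closure_of (range (\<lambda>k. (g ^^ k) z)) = topspace Z"

end

theory Submission
  imports Defs
begin


lemma Fnf_iter: "(Fnf f ^^ k) A = (f ^^ k) ` A"
  by (induction k) (auto simp: Fnf_def image_comp)

lemma Fn_sub: "Fn X n \<subseteq> topspace (vietoris X)"
proof -
  have "openin X (topspace X)" by simp
  then have "{A. A \<subseteq> topspace X} \<in> {{A. A \<subseteq> U} | U. openin X U}" by blast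
  then show ?thesis unfolding vietoris_def Fn_def topology_generated_by_topspace by blast
qed

lemma topspace_Fn_top: "topspace (Fn_top X n) = Fn X n"
  using Fn_sub[of X n] unfolding Fn_top_def by auto

lemma open_box: "openin X U \<Longrightarrow> openin (Fn_top X n) {A \<in> Fn X n. A \<subseteq> U}"
proof -
  assume "openin X U"
  then have "openin (vietoris X) {A. A \<subseteq> U}"
    unfolding vietoris_def by (intro topology_generated_by_Basis) blast
  moreover have "{A \<in> Fn X n. A \<subseteq> U} = {A. A \<subseteq> U} \<inter> Fn X n" by auto
  ultimately show ?thesis unfolding Fn_top_def openin_subtopology by blast
qed

lemma open_hit: "openin X U \<Longrightarrow> openin (Fn_top X n) {A \<in> Fn X n. A \<inter> U \<noteq> {}}"
proof -
  assume "openin X U"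
  then have "openin (vietoris X) {A. A \<subseteq> topspace X \<and> A \<inter> U \<noteq> {}}"
    unfolding vietoris_def by (intro topology_generated_by_Basis) blast
  moreover have "{A \<in> Fn X n. A \<inter> U \<noteq> {}} = {A. A \<subseteq> topspace X \<and> A \<inter> U \<noteq> {}} \<inter> Fn X n"
    by (auto simp: Fn_def)
  ultimately show ?thesis unfolding Fn_top_def openin_subtopology by blast
qed

lemma open_nonsingle:
  assumes "Hausdorff_space X"
  shows "openin (Fn_top X n) (Fn X n - F1 X)"
proof (subst openin_subopen, intro ballI)
  fix A assume A: "A \<in> Fn X n - F1 X"
  then have AX: "A \<subseteq> topspace X" and "A \<noteq> {}" by (auto simp: Fn_def)
  then obtain a where a: "a \<in> A" by blast
  have "A \<noteq> {a}"
  proof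
    assume "A = {a}"
    moreover have "a \<in> topspace X" using a AX by blast
    ultimately have "A \<in> F1 X" unfolding F1_def by blast
    then show False using A by blast
  qed
  then obtain b where b: "b \<in> A" "a \<noteq> b" using a by blast
  have "a \<in> topspace X" "b \<in> topspace X" using a b AX by auto
  then obtain U V where UV: "openin X U" "openin X V" "a \<in> U" "b \<in> V" "disjnt U V"
    using assms b(2) unfolding Hausdorff_space_def by metis
  let ?T = "{C \<in> Fn X n. C \<inter> U \<noteq> {}} \<inter> {C \<in> Fn X n. C \<inter> V \<noteq> {}}"
  have "openin (Fn_top X n) ?T" using open_hit[OF UV(1)] open_hit[OF UV(2)] by (rule openin_Int)
  moreover have "A \<in> ?T"
  proof -
    have "A \<in> Fn X n" using A by simp
    moreover have "A \<inter> U \<noteq> {}" using a UV(3) by blast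
    moreover have "A \<inter> V \<noteq> {}" using b UV(4) by blast
    ultimately show ?thesis by simp
  qed
  moreover have "?T \<subseteq> Fn X n - F1 X"
  proof
    fix C assume C: "C \<in> ?T"
    have "C \<notin> F1 X"
    proof
      assume "C \<in> F1 X"
      then obtain z where z: "C = {z}" unfolding F1_def by blast
      have "z \<in> U" "z \<in> V" using C unfolding z by auto
      then show False using UV(5) unfolding disjnt_def by blast
    qed
    then show "C \<in> Fn X n - F1 X" using C by blast
  qed
  ultimately show "\<exists>T. openin (Fn_top X n) T \<and> A \<in> T \<and> T \<subseteq> Fn X n - F1 X" by blast
qed

lemma gen_pair_gen:
  assumes "generate_topology_on S V"
    and basis: "\<And>s. s \<in> S \<Longrightarrow> {x} \<in> s \<Longrightarrow> \<exists>N. openin X N \<and> x \<in> N \<and> (\<forall>y\<in>N. {x,y} \<in> s)"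
  shows "{x} \<in> V \<Longrightarrow> \<exists>N. openin X N \<and> x \<in> N \<and> (\<forall>y\<in>N. {x,y} \<in> V)"
  using assms(1)
proof (induction rule: generate_topology_on.induct)
  case Empty
  then show ?case by simp
next
  case (Int a b)
  have "{x} \<in> a" "{x} \<in> b" using Int.prems by auto
  then obtain N1 N2 where N: "openin X N1" "x \<in> N1" "\<forall>y\<in>N1. {x,y} \<in> a"
    "openin X N2" "x \<in> N2" "\<forall>y\<in>N2. {x,y} \<in> b" using Int.IH by metis
  have "openin X (N1 \<inter> N2)" using N by (simp add: openin_Int)
  moreover have "\<forall>y\<in>N1 \<inter> N2. {x,y} \<in> a \<inter> b" using N by blast
  moreover have "x \<in> N1 \<inter> N2" using N by blast
  ultimately show ?case by blast
next
  case (UN K)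
  then obtain k where k: "k \<in> K" "{x} \<in> k" by blast
  then obtain N where "openin X N" "x \<in> N" "\<forall>y\<in>N. {x,y} \<in> k" using UN.IH by metis
  then show ?case using k by blast
next
  case (Basis s)
  then show ?case using basis by blast
qed

lemma gen_pair:
  assumes "generate_topology_on
     ({{A. A \<subseteq> U} | U. openin X U} \<union> {{A. A \<subseteq> topspace X \<and> A \<inter> U \<noteq> {}} | U. openin X U}) V"
    and x: "x \<in> topspace X" and "{x} \<in> V"
  shows "\<exists>N. openin X N \<and> x \<in> N \<and> (\<forall>y\<in>N. {x,y} \<in> V)"
proof (rule gen_pair_gen[OF assms(1) _ assms(3)])
  fix s assume s: "s \<in> {{A. A \<subseteq> U} | U. openin X U} \<union> {{A. A \<subseteq> topspace X \<and> A \<inter> U \<noteq> {}} | U. openin X U}"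
    and xs: "{x} \<in> s"
  from s show "\<exists>N. openin X N \<and> x \<in> N \<and> (\<forall>y\<in>N. {x,y} \<in> s)"
  proof
    assume "s \<in> {{A. A \<subseteq> U} | U. openin X U}"
    then obtain U where U: "s = {A. A \<subseteq> U}" "openin X U" by blast
    have "x \<in> U" using xs U(1) by blast
    moreover have "\<forall>y\<in>U. {x,y} \<in> s" using U(1) \<open>x \<in> U\<close> by blast
    ultimately show ?thesis using U(2) by blast
  next
    assume "s \<in> {{A. A \<subseteq> topspace X \<and> A \<inter> U \<noteq> {}} | U. openin X U}"
    then obtain U where U: "s = {A. A \<subseteq> topspace X \<and> A \<inter> U \<noteq> {}}" "openin X U" by blast
    have "x \<in> U" using xs U(1) by blast
    have "\<forall>y\<in>topspace X. {x,y} \<in> s" using U(1) \<open>x \<in> U\<close> x by blast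
    then show ?thesis using x by (intro exI[of _ "topspace X"]) simp
  qed
qed

lemma exists_nonsingle:
  assumes "X derived_set_of (topspace X) = topspace X" "n \<ge> 2"
    "openin (Fn_top X n) W" "{x} \<in> W"
  shows "\<exists>C\<in>W. C \<notin> F1 X"
proof -
  obtain V where V: "openin (vietoris X) V" "W = V \<inter> Fn X n"
    using assms(3) unfolding Fn_top_def openin_subtopology by blast
  have x: "x \<in> topspace X" using assms(4) V by (auto simp: Fn_def)
  have g: "generate_topology_on
     ({{A. A \<subseteq> U} | U. openin X U} \<union> {{A. A \<subseteq> topspace X \<and> A \<inter> U \<noteq> {}} | U. openin X U}) V"
    using V(1) unfolding vietoris_def openin_topology_generated_by_iff .
  have "{x} \<in> V" using assms(4) V(2) by blast
  from gen_pair[OF g x this] obtain N where N: "openin X N" "x \<in> N" "\<forall>y\<in>N. {x,y} \<in> V"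
    by blast
  have "x \<in> X derived_set_of (topspace X)" using assms(1) x by simp
  then obtain y where y: "y \<in> N" "y \<in> topspace X" "y \<noteq> x"
    using N unfolding in_derived_set_of by blast
  have "{x,y} \<in> Fn X n" using x y assms(2) by (auto simp: Fn_def)
  moreover have "{x,y} \<notin> F1 X" using y unfolding F1_def by (auto simp: doubleton_eq_iff)
  ultimately show ?thesis using N y V by blast
qed



definition SFpred :: "'a topology \<Rightarrow> nat \<Rightarrow> 'a set set set \<Rightarrow> bool" where
  "SFpred X n = (\<lambda>U. U \<subseteq> qmap X ` Fn X n \<and>
       openin (Fn_top X n) {A \<in> Fn X n. qmap X A \<in> U})"

lemma SF_istop: "istopology (SFpred X n)"
  unfolding istopology_def
proof (intro conjI allI impI)
  fix S T assume S: "SFpred X n S" and T: "SFpred X n T"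
  have e: "{A \<in> Fn X n. qmap X A \<in> S \<inter> T} = {A \<in> Fn X n. qmap X A \<in> S} \<inter> {A \<in> Fn X n. qmap X A \<in> T}"
    by blast
  show "SFpred X n (S \<inter> T)"
    using S T unfolding SFpred_def e by (auto intro: openin_Int)
next
  fix K assume K: "\<forall>S\<in>K. SFpred X n S"
  have e: "{A \<in> Fn X n. qmap X A \<in> \<Union>K} = \<Union>((\<lambda>S. {A \<in> Fn X n. qmap X A \<in> S}) ` K)"
    by blast
  have "openin (Fn_top X n) (\<Union>((\<lambda>S. {A \<in> Fn X n. qmap X A \<in> S}) ` K))"
    using K unfolding SFpred_def by (intro openin_Union) blast
  moreover have "\<Union>K \<subseteq> qmap X ` Fn X n" using K unfolding SFpred_def by blast
  ultimately show "SFpred X n (\<Union>K)" unfolding SFpred_def e by blast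
qed

lemma openin_SF: "openin (SF_top X n) U \<longleftrightarrow> U \<subseteq> qmap X ` Fn X n \<and>
       openin (Fn_top X n) {A \<in> Fn X n. qmap X A \<in> U}"
proof -
  have "SF_top X n = topology (SFpred X n)" unfolding SF_top_def SFpred_def by simp
  then show ?thesis using SF_istop[of X n] by (simp add: SFpred_def)
qed

lemma topspace_SF: "topspace (SF_top X n) = qmap X ` Fn X n"
proof
  show "topspace (SF_top X n) \<subseteq> qmap X ` Fn X n"
    unfolding topspace_def using openin_SF by blast
next
  have "{A \<in> Fn X n. qmap X A \<in> qmap X ` Fn X n} = topspace (Fn_top X n)"
    by (auto simp: topspace_Fn_top)
  then have "openin (SF_top X n) (qmap X ` Fn X n)"
    unfolding openin_SF by simp
  then show "qmap X ` Fn X n \<subseteq> topspace (SF_top X n)" by (rule openin_subset)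
qed

lemma Fnf_Fn:
  assumes f: "f ` topspace X \<subseteq> topspace X" and A: "A \<in> Fn X n"
  shows "Fnf f A \<in> Fn X n"
proof -
  have A1: "A \<subseteq> topspace X" "A \<noteq> {}" "finite A" "card A \<le> n" using A unfolding Fn_def by auto
  have "f ` A \<subseteq> topspace X" using A1(1) f by (meson image_mono order_trans)
  moreover have "f ` A \<noteq> {}" using A1(2) by simp
  moreover have "finite (f ` A)" using A1(3) by simp
  moreover have "card (f ` A) \<le> n" using card_image_le[OF A1(3), of f] A1(4) by linarith
  ultimately show ?thesis unfolding Fn_def Fnf_def by blast
qed

lemma F1_Fnf: "f ` topspace X \<subseteq> topspace X \<Longrightarrow> A \<in> F1 X \<Longrightarrow> Fnf f A \<in> F1 X"
  unfolding F1_def Fnf_def by auto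

lemma SFf_q:
  assumes "f ` topspace X \<subseteq> topspace X"
  shows "SFf X f (qmap X A) = qmap X (Fnf f A)"
proof (cases "A \<in> F1 X")
  case True
  then show ?thesis using F1_Fnf[OF assms True] by (simp add: SFf_def qmap_def)
next
  case False
  have "{A} \<noteq> F1 X" using False by auto
  then show ?thesis using False by (simp add: SFf_def qmap_def)
qed

lemma iter_Fn: "f ` topspace X \<subseteq> topspace X \<Longrightarrow> B \<in> Fn X n \<Longrightarrow> (Fnf f ^^ k) B \<in> Fn X n"
  by (induction k) (auto intro: Fnf_Fn)

lemma iter_SF: "f ` topspace X \<subseteq> topspace X \<Longrightarrow>
   (SFf X f ^^ k) (qmap X B) = qmap X ((Fnf f ^^ k) B)"
  by (induction k) (auto simp: SFf_q)

lemma qinj: "C \<notin> F1 X \<Longrightarrow> qmap X A = qmap X C \<Longrightarrow> A = C"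
  unfolding qmap_def by (auto split: if_splits)

lemma dense_range:
  "Z closure_of range g = topspace Z \<longleftrightarrow> (\<forall>W. openin Z W \<and> W \<noteq> {} \<longrightarrow> (\<exists>k. g k \<in> W))"
  unfolding dense_intersects_open by blast

lemma part1:
  assumes X: "compactum X" and n: "n \<ge> 2" and B: "B \<in> Fn X n"
    and f: "f ` topspace X \<subseteq> topspace X"
  shows "(transitive_point (Fn_top X n) (Fnf f) B
                 \<longleftrightarrow> transitive_point (SF_top X n) (SFf X f) (qmap X B))
            \<and> (transitive_point (Fn_top X n) (Fnf f) B
                 \<longrightarrow> (\<forall>x\<in>B. transitive_point X f x))"
proof -
  have H: "Hausdorff_space X" and P: "X derived_set_of (topspace X) = topspace X"
    using X unfolding compactum_def by auto
  have rSF: "(\<lambda>k. (SFf X f ^^ k) (qmap X B)) = (\<lambda>k. qmap X ((Fnf f ^^ k) B))"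
    using iter_SF[OF f] by auto
  have qB: "qmap X B \<in> topspace (SF_top X n)" using B topspace_SF by blast
  have TFn: "transitive_point (Fn_top X n) (Fnf f) B \<longleftrightarrow>
     (\<forall>W. openin (Fn_top X n) W \<and> W \<noteq> {} \<longrightarrow> (\<exists>k. (Fnf f ^^ k) B \<in> W))"
    unfolding transitive_point_def dense_range using B by (simp add: topspace_Fn_top)
  have TSF: "transitive_point (SF_top X n) (SFf X f) (qmap X B) \<longleftrightarrow>
     (\<forall>U. openin (SF_top X n) U \<and> U \<noteq> {} \<longrightarrow> (\<exists>k. qmap X ((Fnf f ^^ k) B) \<in> U))"
    unfolding transitive_point_def dense_range rSF using qB by simp
  have A: "transitive_point (SF_top X n) (SFf X f) (qmap X B)"
    if T: "transitive_point (Fn_top X n) (Fnf f) B"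
    unfolding TSF
  proof (intro allI impI)
    fix U assume U: "openin (SF_top X n) U \<and> U \<noteq> {}"
    let ?P = "{A \<in> Fn X n. qmap X A \<in> U}"
    have U2: "U \<subseteq> qmap X ` Fn X n" "openin (Fn_top X n) ?P"
      using U unfolding openin_SF by auto
    obtain u where "u \<in> U" using U by blast
    then obtain A where "A \<in> Fn X n" "u = qmap X A" using U2(1) by blast
    then have "A \<in> ?P" using \<open>u \<in> U\<close> by simp
    then have "?P \<noteq> {}" by blast
    then obtain k where "(Fnf f ^^ k) B \<in> ?P" using T U2(2) unfolding TFn by blast
    then show "\<exists>k. qmap X ((Fnf f ^^ k) B) \<in> U" by blast
  qed
  have Bk: "transitive_point (Fn_top X n) (Fnf f) B"
    if T: "transitive_point (SF_top X n) (SFf X f) (qmap X B)"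
    unfolding TFn
  proof (intro allI impI)
    fix W assume W: "openin (Fn_top X n) W \<and> W \<noteq> {}"
    let ?W = "W \<inter> (Fn X n - F1 X)"
    have oW: "openin (Fn_top X n) ?W" using W open_nonsingle[OF H] by (intro openin_Int) auto
    have WF: "W \<subseteq> Fn X n" using openin_subset[of "Fn_top X n" W] W unfolding topspace_Fn_top by simp
    have "?W \<noteq> {}"
    proof -
      obtain A where A: "A \<in> W" using W by blast
      have AF: "A \<in> Fn X n" using A WF by blast
      show ?thesis
      proof (cases "A \<in> F1 X")
        case False then show ?thesis using A AF by blast
      next
        case True
        then obtain x where "A = {x}" unfolding F1_def by blast
        then have "{x} \<in> W" using A by simp
        then obtain C where "C \<in> W" "C \<notin> F1 X" using exists_nonsingle[OF P n] W by blast
        moreover have "C \<in> Fn X n" using \<open>C \<in> W\<close> WF by blast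
        ultimately show ?thesis by blast
      qed
    qed
    then have ne: "qmap X ` ?W \<noteq> {}" by blast
    have pre: "{A \<in> Fn X n. qmap X A \<in> qmap X ` ?W} = ?W"
    proof (intro equalityI subsetI)
      fix A assume "A \<in> {A \<in> Fn X n. qmap X A \<in> qmap X ` ?W}"
      then obtain C where C: "C \<in> ?W" "qmap X A = qmap X C" by blast
      then have "A = C" using qinj[of C X A] by blast
      then show "A \<in> ?W" using C by simp
    next
      fix A assume "A \<in> ?W"
      then show "A \<in> {A \<in> Fn X n. qmap X A \<in> qmap X ` ?W}" by blast
    qed
    have "openin (SF_top X n) (qmap X ` ?W)"
      unfolding openin_SF pre using oW by blast
    then obtain k where "qmap X ((Fnf f ^^ k) B) \<in> qmap X ` ?W" using T ne unfolding TSF by blast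
    then obtain C where C: "C \<in> ?W" "qmap X ((Fnf f ^^ k) B) = qmap X C" by blast
    then have "(Fnf f ^^ k) B = C" using qinj[of C X] by blast
    then show "\<exists>k. (Fnf f ^^ k) B \<in> W" using C by blast
  qed
  have C: "\<forall>x\<in>B. transitive_point X f x" if T: "transitive_point (Fn_top X n) (Fnf f) B"
  proof
    fix x assume x: "x \<in> B"
    have xX: "x \<in> topspace X" using x B unfolding Fn_def by blast
    show "transitive_point X f x"
      unfolding transitive_point_def dense_range
    proof (intro conjI xX allI impI)
      fix U assume U: "openin X U \<and> U \<noteq> {}"
      then obtain u where u: "u \<in> U" by blast
      have uX: "u \<in> topspace X" using u U openin_subset by blast
      let ?P = "{A \<in> Fn X n. A \<subseteq> U}"
      have "openin (Fn_top X n) ?P" using open_box U by blast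
      moreover have "{u} \<in> ?P" using u uX n unfolding Fn_def by auto
      ultimately obtain k where "(Fnf f ^^ k) B \<in> ?P" using T unfolding TFn by blast
      then have "(f ^^ k) x \<in> U" using x unfolding Fnf_iter by blast
      then show "\<exists>k. (f ^^ k) x \<in> U" by blast
    qed
  qed
  show ?thesis using A Bk C by blast
qed



lemma I01_compactum: "compactum (top_of_set {0..1::real})"
  unfolding compactum_def
proof (intro conjI)
  show "compact_space (top_of_set {0..1::real})"
    by (rule compact_space_subtopology) simp
  show "Hausdorff_space (top_of_set {0..1::real})"
    by (rule Hausdorff_space_subtopology) simp
  show "\<exists>x\<in>topspace (top_of_set {0..1::real}). \<exists>y\<in>topspace (top_of_set {0..1::real}). x \<noteq> y"
    by (intro bexI[of _ 0] bexI[of _ 1]) auto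
  show "top_of_set {0..1::real} derived_set_of topspace (top_of_set {0..1::real}) = topspace (top_of_set {0..1::real})"
  proof (rule antisym)
    show "top_of_set {0..1::real} derived_set_of topspace (top_of_set {0..1::real}) \<subseteq> topspace (top_of_set {0..1::real})"
      by (rule derived_set_of_subset_topspace)
    show "topspace (top_of_set {0..1::real}) \<subseteq> top_of_set {0..1::real} derived_set_of topspace (top_of_set {0..1::real})"
    proof
      fix x assume x: "x \<in> topspace (top_of_set {0..1::real})"
      then have x01: "0 \<le> x" "x \<le> 1" by auto
      show "x \<in> top_of_set {0..1::real} derived_set_of topspace (top_of_set {0..1::real})"
        unfolding in_derived_set_of
      proof (intro conjI x allI impI)
        fix T assume T: "x \<in> T \<and> openin (top_of_set {0..1::real}) T"
        then obtain e where e: "e > 0" "\<forall>x'\<in>{0..1}. dist x' x < e \<longrightarrow> x' \<in> T"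
          unfolding openin_euclidean_subtopology_iff by blast
        define d where "d = min (e/2) (1/2)"
        have d: "d > 0" "d < e" "d \<le> 1/2" using e(1) unfolding d_def by auto
        define y where "y = (if x \<le> 1/2 then x + d else x - d)"
        have y01: "y \<in> {0..1}" using x01 d unfolding y_def by auto
        have "dist y x < e" using d unfolding y_def dist_real_def by auto
        then have "y \<in> T" using e y01 by blast
        moreover have "y \<noteq> x" using d unfolding y_def by auto
        ultimately show "\<exists>y. y \<noteq> x \<and> y \<in> topspace (top_of_set {0..1::real}) \<and> y \<in> T"
          using y01 by auto
      qed
    qed
  qed
qed

definition Dset :: "real set" where "Dset = \<rat> \<inter> {0<..<1}"

lemma Dset_countable: "countable Dset"
  unfolding Dset_def by (rule countable_subset[OF _ countable_rat]) blast

lemma Dset_infinite: "infinite Dset"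
proof -
  let ?h = "\<lambda>k::nat. 1 / (real k + 2)"
  have "inj ?h" by (rule injI) (simp add: divide_eq_eq field_simps)
  moreover have "range ?h \<subseteq> Dset"
  proof
    fix y assume "y \<in> range ?h"
    then obtain k where k: "y = ?h k" by blast
    have "y \<in> \<rat>" unfolding k by simp
    moreover have "0 < y" "y < 1" unfolding k by (auto simp: divide_less_eq)
    ultimately show "y \<in> Dset" unfolding Dset_def by simp
  qed
  ultimately show ?thesis using infinite_super range_inj_infinite by blast
qed

lemma Dset_dense:
  assumes U: "openin (top_of_set {0..1::real}) U" "u \<in> U"
  shows "\<exists>r\<in>Dset. r \<in> U"
proof -
  have "U \<subseteq> {0..1}" using openin_subset[OF U(1)] by simp
  then have u01: "0 \<le> u" "u \<le> 1" using U(2) by auto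
  obtain e where e: "e > 0" "\<forall>x'\<in>{0..1}. dist x' u < e \<longrightarrow> x' \<in> U"
    using U unfolding openin_euclidean_subtopology_iff by blast
  have "max 0 (u - e) < min 1 (u + e)"
    unfolding max_less_iff_conj min_less_iff_conj using e(1) u01 by linarith
  then obtain r where r: "r \<in> \<rat>" "max 0 (u - e) < r" "r < min 1 (u + e)"
    using Rats_dense_in_real by blast
  have r2: "0 < r" "u - e < r" "r < 1" "r < u + e"
    using r(2,3) unfolding max_less_iff_conj min_less_iff_conj by auto
  have "dist r u < e" unfolding dist_real_def using r2 by (simp add: abs_diff_less_iff)
  moreover have "r \<in> {0..1}" using r2 by simp
  ultimately have "r \<in> U" using e(2) by blast
  moreover have "r \<in> Dset" using r(1) r2 unfolding Dset_def by simp
  ultimately show ?thesis by blast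
qed

lemma part2:
  "\<exists>(X::real topology) (n::nat) (B::real set) (f::real \<Rightarrow> real).
            compactum X \<and> n \<ge> 2 \<and> B \<in> Fn X n \<and> f ` topspace X \<subseteq> topspace X
            \<and> (\<forall>x\<in>B. transitive_point X f x)
            \<and> \<not> transitive_point (Fn_top X n) (Fnf f) B"
proof -
  obtain g :: "real \<Rightarrow> nat" where g: "bij_betw g Dset UNIV"
    using countableE_infinite[OF Dset_countable Dset_infinite] by blast
  define e where "e = inv_into Dset g"
  have eb: "bij_betw e UNIV Dset" unfolding e_def by (rule bij_betw_inv_into[OF g])
  have eD: "e k \<in> Dset" for k using eb bij_betwE by blast
  have ge: "g (e k) = k" for k unfolding e_def using g by (simp add: bij_betw_inv_into_right)
  have De: "\<exists>k. e k = d" if d: "d \<in> Dset" for d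
  proof -
    have "d \<in> range e" using eb d unfolding bij_betw_def by simp
    then show ?thesis by auto
  qed
  have e01: "0 < e k" "e k < 1" for k using eD[of k] unfolding Dset_def by auto
  define f where "f x = (if x \<in> Dset then e (Suc (g x)) else e 0)" for x
  define X where "X = top_of_set {0..1::real}"
  define B where "B = {0::real, 1}"
  have tX: "topspace X = {0..1}" unfolding X_def by simp
  have 01: "(0::real) \<notin> Dset" "(1::real) \<notin> Dset" unfolding Dset_def by auto
  have orbit: "(f ^^ Suc k) x = e k" if "x \<in> B" for x k
  proof (induction k)
    case 0
    then show ?case using that 01 unfolding B_def f_def by auto
  next
    case (Suc k)
    have "(f ^^ Suc (Suc k)) x = f ((f ^^ Suc k) x)" by simp
    also have "\<dots> = f (e k)" using Suc by simp
    also have "\<dots> = e (Suc k)" unfolding f_def using eD ge by simp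
    finally show ?case .
  qed
  have fX: "f ` topspace X \<subseteq> topspace X"
    unfolding tX f_def using e01 by (auto simp: less_imp_le)
  have BF: "B \<in> Fn X 2" unfolding Fn_def tX B_def by auto
  have trans: "transitive_point X f x" if x: "x \<in> B" for x
    unfolding transitive_point_def dense_range
  proof (intro conjI allI impI)
    show "x \<in> topspace X" using x unfolding tX B_def by auto
    fix U assume U: "openin X U \<and> U \<noteq> {}"
    then obtain u where "u \<in> U" by blast
    moreover have "openin (top_of_set {0..1::real}) U" using U unfolding X_def by blast
    ultimately obtain r where r: "r \<in> Dset" "r \<in> U" using Dset_dense by blast
    then obtain k where "e k = r" using De by blast
    then have "(f ^^ Suc k) x \<in> U" using orbit[OF x] r by simp
    then show "\<exists>k. (f ^^ k) x \<in> U" by blast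
  qed
  have H: "Hausdorff_space X" using I01_compactum unfolding X_def compactum_def by blast
  have ntrans: "\<not> transitive_point (Fn_top X 2) (Fnf f) B"
  proof
    assume T: "transitive_point (Fn_top X 2) (Fnf f) B"
    let ?W = "{A \<in> Fn X 2. A \<subseteq> topspace X - {0}} \<inter> (Fn X 2 - F1 X)"
    have "closedin X {0}" using H tX by (intro closedin_Hausdorff_singleton) auto
    then have "openin X (topspace X - {0})" by (rule openin_diff[OF openin_topspace])
    then have oW: "openin (Fn_top X 2) ?W"
      by (intro openin_Int open_box open_nonsingle[OF H])
    have "{1/2, 1} \<in> ?W"
    proof -
      have "{1/2, 1::real} \<in> Fn X 2" unfolding Fn_def tX by auto
      moreover have "{1/2, 1::real} \<subseteq> topspace X - {0}" unfolding tX by auto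
      moreover have "{1/2, 1::real} \<notin> F1 X" unfolding F1_def by (auto simp: doubleton_eq_iff)
      ultimately show ?thesis by blast
    qed
    then have "?W \<noteq> {}" by blast
    then obtain k where k: "(Fnf f ^^ k) B \<in> ?W"
      using T oW unfolding transitive_point_def dense_range by blast
    show False
    proof (cases k)
      case 0
      then have "(Fnf f ^^ k) B = B" by simp
      then show False using k unfolding B_def by blast
    next
      case (Suc m)
      have "(Fnf f ^^ k) B = (f ^^ k) ` B" by (rule Fnf_iter)
      also have "\<dots> = {e m}" using orbit unfolding Suc B_def by auto
      finally have "(Fnf f ^^ k) B \<in> F1 X" unfolding F1_def tX using e01[of m] by auto
      then show False using k by blast
    qed
  qed
  show ?thesis
    apply (rule exI[of _ X], rule exI[of _ 2], rule exI[of _ B], rule exI[of _ f])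
    using I01_compactum BF fX trans ntrans unfolding X_def by simp
qed

theorem theorem15:
  shows "(\<forall>(X::'a topology) (n::nat) (B::'a set) (f::'a \<Rightarrow> 'a).
            compactum X \<and> n \<ge> 2 \<and> B \<in> Fn X n \<and> f ` topspace X \<subseteq> topspace X \<longrightarrow>
              (transitive_point (Fn_top X n) (Fnf f) B
                 \<longleftrightarrow> transitive_point (SF_top X n) (SFf X f) (qmap X B))
            \<and> (transitive_point (Fn_top X n) (Fnf f) B
                 \<longrightarrow> (\<forall>x\<in>B. transitive_point X f x)))
       \<and> (\<exists>(X::real topology) (n::nat) (B::real set) (f::real \<Rightarrow> real).
            compactum X \<and> n \<ge> 2 \<and> B \<in> Fn X n \<and> f ` topspace X \<subseteq> topspace X
            \<and> (\<forall>x\<in>B. transitive_point X f x)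
            \<and> \<not> transitive_point (Fn_top X n) (Fnf f) B)"
  using part1 part2 by blast

end
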